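(* Let $n\ge 2$ be an integer, $\beta>0$, and $0<u_0<k\le 2u_0$. Let $H(u,y)=\frac{y^2}{2}+\beta\left(-\frac{u^4}{4}+\frac{k+u_0}{3}u^3-\frac{ku_0}{2}u^2\right)$ and, for $h\in(h_1,h_2):=\left(\frac{\beta u_0^3}{12}(u_0-2k),\ \frac{\beta k^3}{12}(k-2u_0)\right)$, let $\Gamma_h$ be the closed component of $\{H(u,y)=h\}$ surrounding $(u_0,0)$. Then the function $$G_n(h):=\frac{\oint_{\Gamma_h}u^n y\,du}{\oint_{\Gamma_h}y\,du}$$ is monotone on $(h_1,h_2)$.
   Context: For these parameters $(u_0,0)$ is a center of the Hamiltonian system $u'=y$, $y'=-\beta u(u-u_0)(k-u)$, and the curves $\Gamma_h$, $h\in(h_1,h_2)$, form the maximal periodic annulus around it ($h_1=H(u_0,0)$, $h_2=H(k,0)$, which equals $0$ when $k=2u_0$). The denominator $\oint_{\Gamma_h}y\,du$ is nonzero (its absolute value is the enclosed area). *)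

theory Defs
  imports "HOL-Analysis.Analysis"
begin

definition hpot :: "real \<Rightarrow> real \<Rightarrow> real \<Rightarrow> real \<Rightarrow> real" where
  "hpot \<beta> k u0 u = \<beta> * (- (u ^ 4) / 4 + (k + u0) / 3 * u ^ 3 - k * u0 / 2 * u ^ 2)"

definition Ham :: "real \<Rightarrow> real \<Rightarrow> real \<Rightarrow> real \<Rightarrow> real \<Rightarrow> real" where
  "Ham \<beta> k u0 u y = y ^ 2 / 2 + hpot \<beta> k u0 u"

text \<open>The u-interval spanned by the oval Gamma_h surrounding (u0,0):
  the connected component containing u0 of the set where hpot < h.
  Gamma_h = {(u,y). u in the closure of this interval, Ham u y = h}.\<close>
definition oval_base :: "real \<Rightarrow> real \<Rightarrow> real \<Rightarrow> real \<Rightarrow> real set" where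
  "oval_base \<beta> k u0 h = connected_component_set {u. hpot \<beta> k u0 u < h} u0"

text \<open>The line integral of u^n y du over the closed oval Gamma_h (clockwise
  orientation): the upper branch y = sqrt(2(h - hpot u)) traversed with u
  increasing and the lower branch y = - sqrt(2(h - hpot u)) traversed with
  u decreasing each contribute the integral of u^n sqrt(2(h - hpot u)) over
  the u-interval.\<close>
definition oval_integral :: "real \<Rightarrow> real \<Rightarrow> real \<Rightarrow> nat \<Rightarrow> real \<Rightarrow> real" where
  "oval_integral \<beta> k u0 n h =
     2 * integral (oval_base \<beta> k u0 h) (\<lambda>u. u ^ n * sqrt (2 * (h - hpot \<beta> k u0 u)))"

definition G :: "real \<Rightarrow> real \<Rightarrow> real \<Rightarrow> nat \<Rightarrow> real \<Rightarrow> real" where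
  "G \<beta> k u0 n h = oval_integral \<beta> k u0 n h / oval_integral \<beta> k u0 0 h"

end

theory Submission
  imports Defs
begin


lemma convex_pow_nonneg: "convex_on {0::real..} (\<lambda>x. x^n)"
proof (intro f''_ge0_imp_convex)
  show "((\<lambda>x. x ^ n) has_real_derivative of_nat n * x^(n-1)) (at x)" for x
    by (rule derivative_eq_intros | simp)+
  show "((\<lambda>x. of_nat n * x^(n-1)) has_real_derivative of_nat n * of_nat (n-1) * x^(n-2)) (at x)" for x
    by (rule derivative_eq_intros | simp add: eval_nat_numeral)+
  show "\<And>x. x \<in> {0::real..} \<Longrightarrow> 0 \<le> real n * real (n - 1) * x ^ (n - 2)"
    by auto
qed auto


lemma Vdiff: "hpot \<beta> k u0 a - hpot \<beta> k u0 b = \<beta> * (a - b) / 12 *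
   (a * b * (6 * (a+b) - 4 * (k+u0)) - (a+b) * (3 * (a+b)^2 - 4 * (k+u0) * (a+b) + 6 * k * u0))"
  unfolding hpot_def by (simp add: field_simps) algebra

lemma I1: fixes a b k u0 \<beta> :: real
  shows "- (\<beta> * ((k + u0) * a^2 - a^3 - k * u0 * a)) + \<beta> * ((k + u0) * b^2 - b^3 - k * u0 * b)
   = \<beta> * (b - a) * (a * b + (k+u0) * (a+b) - k * u0 - (a+b)^2)"
  by algebra

lemma I2: fixes a b k u0 \<beta> :: real
  shows "b * (- (\<beta> * ((k + u0) * a^2 - a^3 - k * u0 * a))) + a * (\<beta> * ((k + u0) * b^2 - b^3 - k * u0 * b))
   - u0 * (- (\<beta> * ((k + u0) * a^2 - a^3 - k * u0 * a)) + \<beta> * ((k + u0) * b^2 - b^3 - k * u0 * b))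
   = \<beta> * (u0 - a) * (b - u0) * (b - a) * (a + b - k)"
  by algebra

lemma I3: fixes a b k u0 \<beta> :: real
  assumes "a * b * (6 * (a+b) - 4 * (k+u0)) = (a+b) * (3 * (a+b)^2 - 4 * (k+u0) * (a+b) + 6 * k * u0)"
  shows "3*(a+b)^3 - 6*(k+u0)*(a+b)^2 + 4*(k+u0)^2*(a+b) - 4*(k+u0)*k*u0
     = - (a * b + (k+u0) * (a+b) - k * u0 - (a+b)^2) * (6 * (a+b) - 4 * (k+u0))"
  using assms by algebra

lemma I4: fixes a b k u0 \<beta> :: real
  assumes "a * b * (6 * (a+b) - 4 * (k+u0)) = (a+b) * (3 * (a+b)^2 - 4 * (k+u0) * (a+b) + 6 * k * u0)"
  shows "(u0 - a) * (b - u0) * (6 * (a+b) - 4 * (k+u0))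
     = - ((a+b) - 2*u0) * (3*(a+b)^2 - 4*(k+u0)*(a+b) + 2*(k+u0)*u0)"
  using assms by algebra

lemma I5: fixes a b k u0 \<beta> :: real
  assumes "a * b * (6 * (a+b) - 4 * (k+u0)) = (a+b) * (3 * (a+b)^2 - 4 * (k+u0) * (a+b) + 6 * k * u0)"
  shows "(\<beta> * ((k + u0) * a^2 - a^3 - k * u0 * a) + \<beta> * ((k + u0) * b^2 - b^3 - k * u0 * b)) * (6 * (a+b) - 4 * (k+u0))
     = - \<beta> * (a+b) * ((a+b) - 2*u0) * (2*k - (a+b)) / 2 * (6 * (a+b) - 4 * (k+u0))"
  using assms by algebra

definition PhN :: "real \<Rightarrow> real \<Rightarrow> real \<Rightarrow> real" where
  "PhN k u0 s = (s - 2 * u0) * (s - k) * (3 * s^2 - 4 * (k+u0) * s + 2 * (k+u0) * u0)"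
definition PhD :: "real \<Rightarrow> real \<Rightarrow> real \<Rightarrow> real" where
  "PhD k u0 s = 3 * s^3 - 6 * (k+u0) * s^2 + 4 * (k+u0)^2 * s - 4 * (k+u0) * k * u0"
definition PhN' :: "real \<Rightarrow> real \<Rightarrow> real \<Rightarrow> real" where
  "PhN' k u0 s = 12 * s^3 - 21 * s^2 * k - 30 * s^2 * u0 + 8 * s * k^2 + 40 * s * k * u0 + 20 * s * u0^2
     - 10 * k^2 * u0 - 14 * k * u0^2 - 4 * u0^3"
definition PhD' :: "real \<Rightarrow> real \<Rightarrow> real \<Rightarrow> real" where
  "PhD' k u0 s = 9 * s^2 - 12 * (k+u0) * s + 4 * (k+u0)^2"
definition Phi :: "real \<Rightarrow> real \<Rightarrow> real \<Rightarrow> real" where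
  "Phi k u0 s = u0 + PhN k u0 s / PhD k u0 s"

lemma PhN_deriv: "(PhN k u0 has_real_derivative PhN' k u0 s) (at s)"
proof -
  have "((\<lambda>s. (s - 2 * u0) * (s - k) * (3 * s^2 - 4 * (k+u0) * s + 2 * (k+u0) * u0)) has_real_derivative
     (1 * (s - k) + (s - 2*u0) * 1) * (3 * s^2 - 4 * (k+u0) * s + 2 * (k+u0) * u0)
     + (s - 2 * u0) * (s - k) * (3 * (2 * s) - 4 * (k+u0))) (at s)"
    by (auto intro!: derivative_eq_intros)
  moreover have "(1 * (s - k) + (s - 2*u0) * 1) * (3 * s^2 - 4 * (k+u0) * s + 2 * (k+u0) * u0)
     + (s - 2 * u0) * (s - k) * (3 * (2 * s) - 4 * (k+u0)) = PhN' k u0 s"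
    unfolding PhN'_def by algebra
  ultimately show ?thesis unfolding PhN_def by simp
qed

lemma PhD_deriv: "(PhD k u0 has_real_derivative PhD' k u0 s) (at s)"
proof -
  have "((\<lambda>s. 3 * s^3 - 6 * (k+u0) * s^2 + 4 * (k+u0)^2 * s - 4 * (k+u0) * k * u0) has_real_derivative
     3 * (3 * s^2) - 6 * (k+u0) * (2 * s) + 4 * (k+u0)^2) (at s)"
    by (auto intro!: derivative_eq_intros)
  moreover have "3 * (3 * s^2) - 6 * (k+u0) * (2 * s) + 4 * (k+u0)^2 = PhD' k u0 s"
    unfolding PhD'_def by algebra
  ultimately show ?thesis unfolding PhD_def by simp
qed

lemma Phi_deriv: assumes "PhD k u0 s \<noteq> 0"
  shows "(Phi k u0 has_real_derivative
     (PhN' k u0 s * PhD k u0 s - PhN k u0 s * PhD' k u0 s) / (PhD k u0 s)^2) (at s)"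
proof -
  have "((\<lambda>s. u0 + PhN k u0 s / PhD k u0 s) has_real_derivative
     0 + (PhN' k u0 s * PhD k u0 s - PhN k u0 s * PhD' k u0 s) / (PhD k u0 s * PhD k u0 s)) (at s)"
    by (intro DERIV_add DERIV_const DERIV_divide PhN_deriv PhD_deriv assms)
  then show ?thesis unfolding Phi_def by (simp add: power2_eq_square)
qed

lemma num_ident:
  fixes x z w :: real
  defines "u0 \<equiv> x+z+w" and "k \<equiv> 2*x+2*z+w" and "sv \<equiv> 3*x+2*z+2*w"
  shows "PhN' k u0 sv * PhD k u0 sv - PhN k u0 sv * PhD' k u0 sv
     = 24*z^2*w^4 + 48*z^3*w^3 + 24*z^4*w^2 + 16*x*z*w^4 + 160*x*z^2*w^3 + 192*x*z^3*w^2 + 48*x*z^4*w + 8*x^2*w^4 + 104*x^2*z*w^3 + 360*x^2*z^2*w^2 + 192*x^2*z^3*w + 48*x^3*w^3 + 228*x^3*z*w^2 + 276*x^3*z^2*w + 102*x^4*w^2 + 186*x^4*z*w + 18*x^4*z^2 + 90*x^5*w + 36*x^5*z + 27*x^6"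
  unfolding u0_def k_def sv_def PhN'_def PhD_def PhN_def PhD'_def by algebra

lemma num_nonneg:
  fixes s k u0 :: real
  assumes "2*u0 \<le> s" "s \<le> u0 + k" "k \<le> 2*u0"
  shows "0 \<le> PhN' k u0 s * PhD k u0 s - PhN k u0 s * PhD' k u0 s"
proof -
  define x where "x = s - 2*u0"
  define z where "z = u0 + k - s"
  define w where "w = 2*u0 - k"
  have x: "x \<ge> 0" and z: "z \<ge> 0" and w: "w \<ge> 0" using assms by (auto simp: x_def z_def w_def)
  have e1: "u0 = x+z+w" and e2: "k = 2*x+2*z+w" and e3: "s = 3*x+2*z+2*w"
    by (auto simp: x_def z_def w_def)
  show ?thesis unfolding e1 e2 e3 num_ident using x z w
    by (intro add_nonneg_nonneg mult_nonneg_nonneg zero_le_power) auto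
qed

lemma twopoint:
  fixes a b a' b' p q p' q' :: real
  assumes "0 \<le> a'" "a' \<le> a" "a < b" "b \<le> b'" "p > 0" "q > 0" "p' > 0" "q' > 0"
    and m: "(b*p + a*q)/(p+q) \<le> (b'*p' + a'*q')/(p'+q')"
  shows "(b^n*p + a^n*q)/(p+q) \<le> (b'^n*p' + a'^n*q')/(p'+q')"
proof -
  define \<sigma> where "\<sigma> = (b^n - a^n)/(b-a)"
  define L where "L x = a^n + \<sigma> * (x - a)" for x
  have sig: "\<sigma> \<ge> 0" unfolding \<sigma>_def using assms by (auto intro!: divide_nonneg_pos power_mono)
  have cv: "convex_on {0..} (\<lambda>x::real. x^n)" by (rule convex_pow_nonneg)
  have La: "a'^n \<ge> L a'"
  proof (cases "a' = a")
    case True then show ?thesis by (simp add: L_def)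
  next
    case False
    then have lt: "a' < a" using assms by simp
    have "convex_on {a'..b} (\<lambda>x::real. x^n)" by (rule convex_on_subset[OF cv]) (use assms in auto)
    then have "a^n \<le> (b^n - a'^n) / (b - a') * (a - a') + a'^n"
      using convex_onD_Icc'[of a' b "\<lambda>x. x^n" a] assms lt by simp
    then have "(b - a') * a^n \<le> (b^n - a'^n) * (a - a') + (b - a') * a'^n"
      using lt assms by (simp add: field_simps)
    then have "(b - a) * a'^n \<ge> (b - a) * a^n + (b^n - a^n) * (a' - a)"
      by (simp add: algebra_simps)
    then show ?thesis unfolding L_def \<sigma>_def using assms lt by (simp add: field_simps)
  qed
  have Lb: "b'^n \<ge> L b'"
  proof (cases "b' = b")
    case True then show ?thesis using assms by (simp add: L_def \<sigma>_def)
  next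
    case False
    then have lt: "b < b'" using assms by simp
    have "convex_on {a..b'} (\<lambda>x::real. x^n)" by (rule convex_on_subset[OF cv]) (use assms in auto)
    then have "b^n \<le> (b'^n - a^n) / (b' - a) * (b - a) + a^n"
      using convex_onD_Icc'[of a b' "\<lambda>x. x^n" b] assms lt by simp
    then have "(b' - a) * b^n \<le> (b'^n - a^n) * (b - a) + (b' - a) * a^n"
      using lt assms by (simp add: field_simps)
    then have "(b - a) * b'^n \<ge> (b - a) * a^n + (b^n - a^n) * (b' - a)"
      by (simp add: algebra_simps)
    then show ?thesis unfolding L_def \<sigma>_def using assms lt by (simp add: field_simps)
  qed
  have e1: "(b*p + a*q)/(p+q) - a = (b-a)*p/(p+q)" using assms by (simp add: field_simps)
  have e2: "(b^n - a^n)/(b-a) * ((b-a)*p/(p+q)) = (b^n - a^n)*p/(p+q)" using assms by simp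
  have e3: "a^n + (b^n - a^n)*p/(p+q) = (b^n*p + a^n*q)/(p+q)" using assms by (simp add: field_simps)
  have "(b^n*p + a^n*q)/(p+q) = L ((b*p + a*q)/(p+q))"
    unfolding L_def \<sigma>_def e1 e2 e3 ..
  also have "\<dots> \<le> L ((b'*p' + a'*q')/(p'+q'))"
    unfolding L_def using sig m by (simp add: mult_left_mono)
  also have "\<dots> = (L b' * p' + L a' * q')/(p'+q')"
    unfolding L_def using assms by (simp add: field_simps)
  also have "\<dots> \<le> (b'^n*p' + a'^n*q')/(p'+q')"
    using La Lb assms by (intro divide_right_mono add_mono mult_right_mono) auto
  finally show ?thesis .
qed



locale osc =
  fixes \<beta> k u0 :: real
  assumes bpos: "\<beta> > 0" and u0pos: "0 < u0" and u0k: "u0 < k" and k2: "k \<le> 2 * u0"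
begin

abbreviation V where "V \<equiv> hpot \<beta> k u0"

definition dV :: "real \<Rightarrow> real" where
  "dV u = \<beta> * ((k + u0) * u^2 - u^3 - k * u0 * u)"

lemma dV_factor: "dV u = \<beta> * u * (u - u0) * (k - u)"
  unfolding dV_def by algebra

lemma V_deriv: "(V has_real_derivative dV u) (at u)"
  unfolding hpot_def dV_def
  by (auto intro!: derivative_eq_intros)

lemma V_cont: "continuous_on S V"
  unfolding hpot_def by (intro continuous_intros) auto

lemma dV_neg: "0 < u \<Longrightarrow> u < u0 \<Longrightarrow> dV u < 0"
  unfolding dV_factor using bpos u0k
  by (simp add: mult_pos_neg mult_neg_pos)

lemma dV_pos: "u0 < u \<Longrightarrow> u < k \<Longrightarrow> dV u > 0"
  unfolding dV_factor using bpos u0pos by simp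

lemma V_dec: assumes "0 \<le> x" "x < y" "y \<le> u0" shows "V y < V x"
  using DERIV_neg_imp_decreasing_open[of x y V] assms V_deriv dV_neg V_cont by force

lemma V_inc: assumes "u0 \<le> x" "x < y" "y \<le> k" shows "V x < V y"
  using DERIV_pos_imp_increasing_open[of x y V] assms V_deriv dV_pos V_cont by force

definition h1 where "h1 = V u0"
definition h2 where "h2 = V k"

lemma V0: "V 0 = 0" by (simp add: hpot_def)

lemma h12: "h1 < h2" unfolding h1_def h2_def using V_inc[of u0 k] u0k by simp

lemma h1_eq: "h1 = \<beta> * u0 ^ 3 / 12 * (u0 - 2 * k)"
  unfolding h1_def hpot_def by (simp add: field_simps eval_nat_numeral)

lemma h2_eq: "h2 = \<beta> * k ^ 3 / 12 * (k - 2 * u0)"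
  unfolding h2_def hpot_def by (simp add: field_simps eval_nat_numeral)

lemma h2_nonpos: "h2 \<le> 0"
  unfolding h2_eq using bpos u0k u0pos k2
  by (simp add: mult_nonneg_nonpos)

lemma V_odd: "V (u0 + x) - V (u0 - x) = 2/3 * \<beta> * (k - 2*u0) * x^3"
  unfolding hpot_def by (simp add: field_simps eval_nat_numeral)

lemma V_inj1: "0 \<le> x \<Longrightarrow> x \<le> u0 \<Longrightarrow> 0 \<le> y \<Longrightarrow> y \<le> u0 \<Longrightarrow> V x = V y \<Longrightarrow> x = y"
  by (metis V_dec linorder_neqE_linordered_idom order_less_irrefl)

lemma V_inj2: "u0 \<le> x \<Longrightarrow> x \<le> k \<Longrightarrow> u0 \<le> y \<Longrightarrow> y \<le> k \<Longrightarrow> V x = V y \<Longrightarrow> x = y"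
  by (metis V_inc linorder_neqE_linordered_idom order_less_irrefl)

lemma V_range1: "0 \<le> u \<Longrightarrow> u \<le> u0 \<Longrightarrow> h1 \<le> V u \<and> V u \<le> 0"
  unfolding h1_def using V_dec[of u u0] V_dec[of 0 u] V0 by (cases "u = u0"; cases "u = 0") auto

lemma V_range2: "u0 \<le> u \<Longrightarrow> u \<le> k \<Longrightarrow> h1 \<le> V u \<and> V u \<le> h2"
  unfolding h1_def h2_def using V_inc[of u0 u] V_inc[of u k] by (cases "u = u0"; cases "u = k") auto

definition X1 where "X1 v = (THE u. 0 \<le> u \<and> u \<le> u0 \<and> V u = v)"
definition X2 where "X2 v = (THE u. u0 \<le> u \<and> u \<le> k \<and> V u = v)"

lemma ex1: assumes "h1 \<le> v" "v \<le> 0" shows "\<exists>!u. 0 \<le> u \<and> u \<le> u0 \<and> V u = v"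
proof -
  have "\<exists>u. 0 \<le> u \<and> u \<le> u0 \<and> V u = v"
    using IVT2'[of V u0 v 0] assms V_cont u0pos V0 unfolding h1_def by auto
  then show ?thesis using V_inj1 by blast
qed

lemma ex2: assumes "h1 \<le> v" "v \<le> h2" shows "\<exists>!u. u0 \<le> u \<and> u \<le> k \<and> V u = v"
proof -
  have "\<exists>u. u0 \<le> u \<and> u \<le> k \<and> V u = v"
    using IVT'[of V u0 v k] assms V_cont u0k unfolding h1_def h2_def by auto
  then show ?thesis using V_inj2 by blast
qed

lemma X1: assumes "h1 \<le> v" "v \<le> 0" shows "0 \<le> X1 v \<and> X1 v \<le> u0 \<and> V (X1 v) = v"
  unfolding X1_def using theI'[OF ex1[OF assms]] .

lemma X2: assumes "h1 \<le> v" "v \<le> h2" shows "u0 \<le> X2 v \<and> X2 v \<le> k \<and> V (X2 v) = v"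
  unfolding X2_def using theI'[OF ex2[OF assms]] .

lemma X1_V: "0 \<le> u \<Longrightarrow> u \<le> u0 \<Longrightarrow> X1 (V u) = u"
  unfolding X1_def by (rule the_equality) (auto intro: V_inj1)

lemma X2_V: "u0 \<le> u \<Longrightarrow> u \<le> k \<Longrightarrow> X2 (V u) = u"
  unfolding X2_def by (rule the_equality) (auto intro: V_inj2)

lemma X1_h1: "X1 h1 = u0" unfolding h1_def using X1_V[of u0] u0pos by simp
lemma X2_h1: "X2 h1 = u0" unfolding h1_def using X2_V[of u0] u0k by simp

lemma X_strict: assumes "h1 < v" "v < h2"
  shows "0 < X1 v" "X1 v < u0" "u0 < X2 v" "X2 v < k"
proof -
  have v0: "v < 0" using assms h2_nonpos by simp
  note A = X1[of v] X2[of v]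
  show "0 < X1 v" using A assms v0 V0 by (metis less_eq_real_def less_irrefl order.strict_trans)
  show "X1 v < u0" using A assms v0 unfolding h1_def by (metis less_eq_real_def less_irrefl)
  show "u0 < X2 v" using A assms v0 unfolding h1_def by (metis less_eq_real_def less_irrefl)
  show "X2 v < k" using A assms v0 unfolding h2_def by (metis less_eq_real_def less_irrefl)
qed

lemma X1_mono: assumes "h1 \<le> v" "v < v'" "v' \<le> 0" shows "X1 v' < X1 v"
proof (rule ccontr)
  assume "\<not> X1 v' < X1 v"
  then have "X1 v \<le> X1 v'" by simp
  moreover have "0 \<le> X1 v" "X1 v' \<le> u0" "V (X1 v) = v" "V (X1 v') = v'" using X1[of v] X1[of v'] assms by auto
  ultimately show False using V_dec[of "X1 v" "X1 v'"] assms by (cases "X1 v = X1 v'") auto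
qed

lemma X2_mono: assumes "h1 \<le> v" "v < v'" "v' \<le> h2" shows "X2 v < X2 v'"
proof (rule ccontr)
  assume "\<not> X2 v < X2 v'"
  then have "X2 v' \<le> X2 v" by simp
  moreover have "u0 \<le> X2 v'" "X2 v \<le> k" "V (X2 v) = v" "V (X2 v') = v'" using X2[of v] X2[of v'] assms by auto
  ultimately show False using V_inc[of "X2 v'" "X2 v"] assms by (cases "X2 v = X2 v'") auto
qed

lemma img1: "V ` {0..u0} = {h1..0}"
proof
  show "V ` {0..u0} \<subseteq> {h1..0}" using V_range1 by auto
  show "{h1..0} \<subseteq> V ` {0..u0}"
  proof
    fix v assume "v \<in> {h1..0}"
    then show "v \<in> V ` {0..u0}" using X1[of v] by (metis atLeastAtMost_iff image_eqI)
  qed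
qed

lemma img2: "V ` {u0..k} = {h1..h2}"
proof
  show "V ` {u0..k} \<subseteq> {h1..h2}" using V_range2 by auto
  show "{h1..h2} \<subseteq> V ` {u0..k}"
  proof
    fix v assume "v \<in> {h1..h2}"
    then show "v \<in> V ` {u0..k}" using X2[of v] by (metis atLeastAtMost_iff image_eqI)
  qed
qed

lemma X1_cont: "continuous_on {h1..h2} X1"
proof -
  have "continuous_on (V ` {0..u0}) X1"
    by (rule continuous_on_inv) (auto simp: V_cont X1_V)
  moreover have "{h1..h2} \<subseteq> {h1..0}" using h2_nonpos by auto
  ultimately show ?thesis unfolding img1 using continuous_on_subset by blast
qed

lemma X2_cont: "continuous_on {h1..h2} X2"
proof -
  have "continuous_on (V ` {u0..k}) X2"
    by (rule continuous_on_inv) (auto simp: V_cont X2_V)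
  then show ?thesis unfolding img2 .
qed

lemma X1_deriv: assumes "h1 < v" "v < h2" shows "(X1 has_real_derivative inverse (dV (X1 v))) (at v)"
proof (rule DERIV_inverse_function[where f = V and a = h1 and b = h2])
  show "DERIV V (X1 v) :> dV (X1 v)" by (rule V_deriv)
  show "dV (X1 v) \<noteq> 0" using dV_neg X_strict[OF assms] by force
  show "V (X1 y) = y" if "h1 < y" "y < h2" for y using X1[of y] that h2_nonpos by auto
  show "isCont X1 v" using continuous_on_interior[OF X1_cont] assms by auto
qed (use assms in auto)

lemma X2_deriv: assumes "h1 < v" "v < h2" shows "(X2 has_real_derivative inverse (dV (X2 v))) (at v)"
proof (rule DERIV_inverse_function[where f = V and a = h1 and b = h2])
  show "DERIV V (X2 v) :> dV (X2 v)" by (rule V_deriv)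
  show "dV (X2 v) \<noteq> 0" using dV_pos X_strict[OF assms] by force
  show "V (X2 y) = y" if "h1 < y" "y < h2" for y using X2[of y] that by auto
  show "isCont X2 v" using continuous_on_interior[OF X2_cont] assms by auto
qed (use assms in auto)

lemma oval_base_eq: assumes "h1 < h" "h < h2"
  shows "oval_base \<beta> k u0 h = {X1 h<..<X2 h}"
proof -
  let ?S = "{u. V u < h}" and ?T = "{X1 h<..<X2 h}"
  let ?C = "connected_component_set ?S u0"
  note XS = X_strict[OF assms]
  have Va: "V (X1 h) = h" and Vb: "V (X2 h) = h" using X1[of h] X2[of h] assms h2_nonpos by auto
  have TS: "?T \<subseteq> ?S"
  proof
    fix u assume u: "u \<in> ?T"
    show "u \<in> ?S"
    proof (cases "u \<le> u0")
      case True
      then have "V u < V (X1 h)" using V_dec[of "X1 h" u] u XS by auto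
      then show ?thesis using Va by simp
    next
      case False
      then have "V u < V (X2 h)" using V_inc[of u "X2 h"] u XS by auto
      then show ?thesis using Vb by simp
    qed
  qed
  have u0T: "u0 \<in> ?T" using XS by auto
  have TC: "?T \<subseteq> ?C"
    by (rule connected_component_maximal[OF u0T]) (use TS in auto)
  have CT: "?C \<subseteq> ?T"
  proof
    fix x assume x: "x \<in> ?C"
    have conn: "connected ?C" by simp
    have CS: "?C \<subseteq> ?S" by (rule connected_component_subset)
    have u0C: "u0 \<in> ?C" using TC u0T by auto
    have aC: "X1 h \<notin> ?C" using CS Va by auto
    have bC: "X2 h \<notin> ?C" using CS Vb by auto
    show "x \<in> ?T"
    proof (rule ccontr)
      assume "x \<notin> ?T"
      then have "x \<le> X1 h \<or> X2 h \<le> x" by auto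
      then show False
      proof
        assume "x \<le> X1 h"
        moreover have "X1 h \<le> u0" using XS by simp
        ultimately have "X1 h \<in> ?C"
          using conn[unfolded connected_iff_interval, rule_format, OF x u0C, of "X1 h"] by simp
        then show False using aC by simp
      next
        assume "X2 h \<le> x"
        moreover have "u0 \<le> X2 h" using XS by simp
        ultimately have "X2 h \<in> ?C"
          using conn[unfolded connected_iff_interval, rule_format, OF u0C x, of "X2 h"] by simp
        then show False using bC by simp
      qed
    qed
  qed
  show ?thesis unfolding oval_base_def using TC CT by auto
qed

definition A :: "nat \<Rightarrow> real \<Rightarrow> real" where
  "A m v = inverse (dV (X2 v)) * X2 v ^ m - inverse (dV (X1 v)) * X1 v ^ m"

definition F :: "nat \<Rightarrow> real \<Rightarrow> real \<Rightarrow> real" where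
  "F m h' u = u ^ m * sqrt (2 * (h' - V u))"

lemma F_cont: "continuous_on S (F m h')"
  unfolding F_def hpot_def by (intro continuous_intros) auto

lemma sub2: assumes "h1 < h" "h < h2"
  shows "((\<lambda>v. inverse (dV (X2 v)) * F m h' (X2 v)) has_integral integral {u0..X2 h} (F m h')) {h1..h}"
proof -
  have "((\<lambda>v. inverse (dV (X2 v)) *\<^sub>R F m h' (X2 v)) has_integral
      (integral {X2 h1..X2 h} (F m h') - integral {X2 h..X2 h1} (F m h'))) {h1..h}"
  proof (rule has_integral_substitution_general[of "{h1}" h1 h X2 u0 k])
    show "X2 ` {h1..h} \<subseteq> {u0..k}" using X2 assms by fastforce
    show "continuous_on {u0..k} (F m h')" by (rule F_cont)
    show "continuous_on {h1..h} X2" by (rule continuous_on_subset[OF X2_cont]) (use assms in auto)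
    show "(X2 has_real_derivative inverse (dV (X2 x))) (at x within {h1..h})" if "x \<in> {h1..h} - {h1}" for x
      using X2_deriv[of x] that assms by (auto intro: has_field_derivative_at_within)
  qed (use assms in auto)
  moreover have "X2 h1 = u0" by (rule X2_h1)
  moreover have "u0 < X2 h" using X_strict[OF assms] by simp
  ultimately show ?thesis by simp
qed

lemma sub1: assumes "h1 < h" "h < h2"
  shows "((\<lambda>v. inverse (dV (X1 v)) * F m h' (X1 v)) has_integral - integral {X1 h..u0} (F m h')) {h1..h}"
proof -
  have "((\<lambda>v. inverse (dV (X1 v)) *\<^sub>R F m h' (X1 v)) has_integral
      (integral {X1 h1..X1 h} (F m h') - integral {X1 h..X1 h1} (F m h'))) {h1..h}"
  proof (rule has_integral_substitution_general[of "{h1}" h1 h X1 0 u0])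
    show "X1 ` {h1..h} \<subseteq> {0..u0}" using X1 assms h2_nonpos by fastforce
    show "continuous_on {0..u0} (F m h')" by (rule F_cont)
    show "continuous_on {h1..h} X1" by (rule continuous_on_subset[OF X1_cont]) (use assms in auto)
    show "(X1 has_real_derivative inverse (dV (X1 x))) (at x within {h1..h})" if "x \<in> {h1..h} - {h1}" for x
      using X1_deriv[of x] that assms by (auto intro: has_field_derivative_at_within)
  qed (use assms in auto)
  moreover have "X1 h1 = u0" by (rule X1_h1)
  moreover have "X1 h < u0" using X_strict[OF assms] by simp
  ultimately show ?thesis by simp
qed

lemma rep: assumes "h1 < h" "h < h2"
  shows "((\<lambda>v. A m v * sqrt (2 * (h' - v))) has_integral integral {X1 h..X2 h} (F m h')) {h1..h}"
proof -
  note XS = X_strict[OF assms]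
  have diff: "((\<lambda>v. inverse (dV (X2 v)) * F m h' (X2 v) - inverse (dV (X1 v)) * F m h' (X1 v)) has_integral
      (integral {u0..X2 h} (F m h') - - integral {X1 h..u0} (F m h'))) {h1..h}"
    by (rule has_integral_diff[OF sub2[OF assms] sub1[OF assms]])
  have comb: "integral {X1 h..u0} (F m h') + integral {u0..X2 h} (F m h') = integral {X1 h..X2 h} (F m h')"
    using Henstock_Kurzweil_Integration.integral_combine[where a="X1 h" and c=u0 and b="X2 h" and f="F m h'"] XS integrable_continuous_real[OF F_cont] by auto
  have pw: "inverse (dV (X2 v)) * F m h' (X2 v) - inverse (dV (X1 v)) * F m h' (X1 v)
      = A m v * sqrt (2 * (h' - v))" if "v \<in> {h1..h}" for v
  proof -
    have "V (X1 v) = v" "V (X2 v) = v" using X1[of v] X2[of v] that assms h2_nonpos by auto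
    then show ?thesis unfolding A_def F_def by (simp add: algebra_simps)
  qed
  have "((\<lambda>v. A m v * sqrt (2 * (h' - v))) has_integral
      (integral {u0..X2 h} (F m h') - - integral {X1 h..u0} (F m h'))) {h1..h}"
    by (rule has_integral_eq[OF pw diff])
  then show ?thesis using comb by (simp add: add.commute)
qed

lemma oval_rep: assumes "h1 < h" "h < h2"
  shows "oval_integral \<beta> k u0 m h = 2 * integral {h1..h} (\<lambda>v. A m v * sqrt (2 * (h - v)))"
proof -
  have "oval_integral \<beta> k u0 m h = 2 * integral {X1 h<..<X2 h} (F m h)"
    unfolding oval_integral_def oval_base_eq[OF assms] F_def by simp
  also have "\<dots> = 2 * integral {X1 h..X2 h} (F m h)" by (simp add: integral_open_interval_real)
  also have "\<dots> = 2 * integral {h1..h} (\<lambda>v. A m v * sqrt (2 * (h - v)))"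
    using rep[OF assms, of m h] by (simp add: integral_unique)
  finally show ?thesis .
qed

lemma dV_eq: "dV u = \<beta> * ((k + u0) * u^2 - u^3 - k * u0 * u)" by (rule dV_def)

definition psi :: "nat \<Rightarrow> real \<Rightarrow> real" where "psi m v = A m v / A 0 v"

lemma A0_pos: assumes "h1 < v" "v < h2" shows "A 0 v > 0"
proof -
  note XS = X_strict[OF assms]
  have "dV (X1 v) < 0" "dV (X2 v) > 0" using dV_neg dV_pos XS by auto
  then have i1: "inverse (dV (X1 v)) < 0" and i2: "inverse (dV (X2 v)) > 0" by auto
  have "A 0 v = inverse (dV (X2 v)) - inverse (dV (X1 v))" unfolding A_def by simp
  then show ?thesis using i1 i2 by linarith
qed

lemma psi_form: assumes "h1 < v" "v < h2"
  shows "psi m v = (X2 v ^ m * (- dV (X1 v)) + X1 v ^ m * dV (X2 v)) / (- dV (X1 v) + dV (X2 v))"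
proof -
  note XS = X_strict[OF assms]
  have p: "dV (X1 v) < 0" and q: "dV (X2 v) > 0" using dV_neg dV_pos XS by auto
  show ?thesis unfolding psi_def A_def using p q
    by (simp add: inverse_eq_divide field_simps)
qed

lemma A_psi: assumes "h1 < v" "v < h2" shows "A m v = psi m v * A 0 v"
  unfolding psi_def using A0_pos[OF assms] by simp

lemma constraint: assumes "V a = V b" "a \<noteq> b"
  shows "a * b * (6 * (a+b) - 4 * (k+u0)) = (a+b) * (3 * (a+b)^2 - 4 * (k+u0) * (a+b) + 6 * k * u0)"
proof -
  have "\<beta> * (a - b) / 12 * (a * b * (6 * (a+b) - 4 * (k+u0)) - (a+b) * (3 * (a+b)^2 - 4 * (k+u0) * (a+b) + 6 * k * u0)) = 0"
    using Vdiff[of \<beta> k u0 a b] assms by simp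
  then show ?thesis using assms bpos by simp
qed

lemma psi1_sym: assumes "k = 2 * u0" "h1 < v" "v < h2" shows "psi 1 v = u0"
proof -
  note XS = X_strict[OF assms(2,3)]
  define b where "b = X2 v"
  have Vb: "V b = v" using X2[of v] assms unfolding b_def by auto
  have "V (u0 + (b - u0)) - V (u0 - (b - u0)) = 0" using V_odd[of "b - u0"] assms by simp
  then have "V (2*u0 - b) = v" using Vb by (simp add: algebra_simps)
  then have a: "X1 v = 2*u0 - b" using X1_V[of "2*u0 - b"] XS assms unfolding b_def by auto
  have kk1: "k - (2*u0 - b) = b" and kk2: "k - b = 2*u0 - b" using assms(1) by auto
  have e1: "- dV (X1 v) = \<beta> * b * (b - u0) * (2*u0 - b)"
    unfolding a dV_factor kk1 by (simp add: algebra_simps)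
  have e2: "dV (X2 v) = \<beta> * b * (b - u0) * (2*u0 - b)"
    unfolding b_def[symmetric] dV_factor kk2 by (simp add: algebra_simps)
  have pq: "- dV (X1 v) = dV (X2 v)" using e1 e2 by simp
  have q: "dV (X2 v) > 0" using dV_pos XS by auto
  have sum: "X1 v + X2 v = 2*u0" using a b_def by simp
  have "psi 1 v = (X2 v * dV (X2 v) + X1 v * dV (X2 v)) / (dV (X2 v) + dV (X2 v))"
    using psi_form[OF assms(2,3), of 1] pq by simp
  also have "\<dots> = ((X1 v + X2 v) * dV (X2 v)) / (2 * dV (X2 v))"
    by (simp add: algebra_simps)
  also have "\<dots> = u0" using q sum by simp
  finally show ?thesis .
qed

lemma s_ge: assumes "k < 2 * u0" "h1 < v" "v < h2" shows "2 * u0 \<le> X1 v + X2 v"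
proof (rule ccontr)
  assume neg: "\<not> ?thesis"
  note XS = X_strict[OF assms(2,3)]
  define x where "x = u0 - X1 v"
  have Va: "V (X1 v) = v" and Vb: "V (X2 v) = v" using X1[of v] X2[of v] assms h2_nonpos by auto
  have od: "V (u0 + x) - V (u0 - x) < 0"
    unfolding V_odd using XS assms bpos by (simp add: x_def mult_pos_neg mult_neg_pos)
  show False
  proof (cases "u0 + x \<le> k")
    case True
    have "V (X2 v) < V (u0 + x)" using V_inc[of "X2 v" "u0 + x"] XS neg True by (simp add: x_def)
    then show False using od Va Vb by (simp add: x_def)
  next
    case False
    have od2: "V (u0 + (k - u0)) - V (u0 - (k - u0)) < 0"
      unfolding V_odd using XS assms bpos u0k by (simp add: mult_pos_neg mult_neg_pos)
    have "V (u0 - (k - u0)) < V (X1 v)" using V_dec[of "X1 v" "u0 - (k - u0)"] XS False assms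
      by (simp add: x_def)
    moreover have "V (X1 v) < V k" using Va assms unfolding h2_def by simp
    ultimately show False using od2 by simp
  qed
qed

lemma psi1_Phi: assumes "k < 2 * u0" "h1 < v" "v < h2"
  shows "psi 1 v = Phi k u0 (X1 v + X2 v)" and "PhD k u0 (X1 v + X2 v) < 0"
proof -
  note XS = X_strict[OF assms(2,3)]
  define a where "a = X1 v"
  define b where "b = X2 v"
  define s where "s = a + b"
  define c where "c = k + u0"
  define M where "M = a * b + (k+u0) * (a+b) - k * u0 - (a+b)^2"
  have Va: "V a = v" and Vb: "V b = v" using X1[of v] X2[of v] assms h2_nonpos unfolding a_def b_def by auto
  have ab: "a < b" "0 < a" "a < u0" "u0 < b" "b < k" using XS unfolding a_def b_def by auto
  have C: "a * b * (6 * (a+b) - 4 * (k+u0)) = (a+b) * (3 * (a+b)^2 - 4 * (k+u0) * (a+b) + 6 * k * u0)"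
    using constraint[of a b] Va Vb ab by simp
  have p: "dV a < 0" and q: "dV b > 0" using dV_neg dV_pos ab by auto
  have pq: "- dV a + dV b = \<beta> * (b - a) * M" unfolding dV_eq M_def by (rule I1)
  have Mpos: "M > 0"
  proof -
    have "\<beta> * (b - a) * M > 0" using pq p q by simp
    moreover have "\<beta> * (b - a) > 0" using bpos ab by simp
    ultimately show ?thesis using zero_less_mult_pos by blast
  qed
  have sge: "2 * u0 \<le> s" using s_ge[OF assms] unfolding s_def a_def b_def .
  have lin: "6 * s - 4 * c > 0" using sge assms unfolding c_def by simp
  have D: "PhD k u0 s = - M * (6 * s - 4 * c)"
    unfolding PhD_def s_def c_def M_def using I3[OF C] by simp
  show "PhD k u0 (X1 v + X2 v) < 0"
    using D Mpos lin unfolding s_def a_def b_def by (simp add: mult_pos_pos)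
  have num: "b * (- dV a) + a * dV b - u0 * (- dV a + dV b) = \<beta> * (u0 - a) * (b - u0) * (b - a) * (s - k)"
    unfolding dV_eq s_def by (rule I2)
  have N4: "(u0 - a) * (b - u0) * (6 * s - 4 * c) = - (s - 2*u0) * (3* s^2 - 4*c* s + 2*c*u0)"
    unfolding s_def c_def by (rule I4[OF C])
  have numeq: "(u0 - a) * (b - u0) * (s - k) * (6 * s - 4 * c) = - PhN k u0 s"
    using N4 unfolding PhN_def c_def by algebra
  have deneq: "M * (6 * s - 4 * c) = - PhD k u0 s" using D by simp
  have "psi 1 v = (b * (- dV a) + a * dV b) / (- dV a + dV b)"
    using psi_form[OF assms(2,3), of 1] unfolding a_def b_def by simp
  also have "\<dots> = u0 + (b * (- dV a) + a * dV b - u0 * (- dV a + dV b)) / (- dV a + dV b)"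
    using p q by (simp add: field_simps)
  also have "\<dots> = u0 + (\<beta> * (u0 - a) * (b - u0) * (b - a) * (s - k)) / (\<beta> * (b - a) * M)"
    by (subst num, subst pq, rule refl)
  also have "\<dots> = u0 + ((\<beta> * (b - a)) * ((u0 - a) * (b - u0) * (s - k))) / ((\<beta> * (b - a)) * M)"
    by (simp add: algebra_simps)
  also have "\<dots> = u0 + ((u0 - a) * (b - u0) * (s - k)) / M"
    using bpos ab by (subst mult_divide_mult_cancel_left) auto
  also have "\<dots> = u0 + ((u0 - a) * (b - u0) * (s - k) * (6 * s - 4 * c)) / (M * (6 * s - 4 * c))"
    using lin by (subst mult_divide_mult_cancel_right) auto
  also have "\<dots> = u0 + (- PhN k u0 s) / (- PhD k u0 s)"
    by (subst numeq, subst deneq, rule refl)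
  also have "\<dots> = u0 + PhN k u0 s / PhD k u0 s" by simp
  finally show "psi 1 v = Phi k u0 (X1 v + X2 v)" unfolding Phi_def s_def a_def b_def .
qed

lemma s_deriv_nonneg: assumes "k < 2 * u0" "h1 < v" "v < h2"
  shows "inverse (dV (X1 v)) + inverse (dV (X2 v)) \<ge> 0"
proof -
  note XS = X_strict[OF assms(2,3)]
  define a where "a = X1 v"
  define b where "b = X2 v"
  have Va: "V a = v" and Vb: "V b = v" using X1[of v] X2[of v] assms h2_nonpos unfolding a_def b_def by auto
  have ab: "a < b" "0 < a" "a < u0" "u0 < b" "b < k" using XS unfolding a_def b_def by auto
  have C: "a * b * (6 * (a+b) - 4 * (k+u0)) = (a+b) * (3 * (a+b)^2 - 4 * (k+u0) * (a+b) + 6 * k * u0)"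
    using constraint[of a b] Va Vb ab by simp
  have p: "dV a < 0" and q: "dV b > 0" using dV_neg dV_pos ab by auto
  have sge: "2 * u0 \<le> a + b" using s_ge[OF assms] unfolding a_def b_def .
  have lin: "6 * (a+b) - 4 * (k+u0) > 0" using sge assms by simp
  have "(dV a + dV b) * (6 * (a+b) - 4 * (k+u0))
     = - \<beta> * (a+b) * ((a+b) - 2*u0) * (2*k - (a+b)) / 2 * (6 * (a+b) - 4 * (k+u0))"
    unfolding dV_eq by (rule I5[OF C])
  then have sum: "dV a + dV b = - \<beta> * (a+b) * ((a+b) - 2*u0) * (2*k - (a+b)) / 2"
    using lin mult_right_cancel[of "6 * (a+b) - 4 * (k+u0)" "dV a + dV b"
        "- \<beta> * (a+b) * ((a+b) - 2*u0) * (2*k - (a+b)) / 2"] by linarith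
  have "\<beta> * (a+b) * ((a+b) - 2*u0) * (2*k - (a+b)) \<ge> 0"
    using bpos ab sge by (intro mult_nonneg_nonneg) auto
  then have sn: "dV a + dV b \<le> 0" unfolding sum by simp
  have "inverse (dV a) + inverse (dV b) = (dV a + dV b) / (dV a * dV b)"
    using p q by (simp add: field_simps)
  also have "\<dots> \<ge> 0" using sn p q by (intro divide_nonpos_neg) (auto simp: mult_neg_pos)
  finally show ?thesis unfolding a_def b_def .
qed

lemma psi1_mono_asym: assumes "k < 2 * u0" "h1 < v" "v \<le> v'" "v' < h2"
  shows "psi 1 v \<le> psi 1 v'"
proof -
  define g where "g x = Phi k u0 (X1 x + X2 x)" for x
  have "g v \<le> g v'"
  proof (rule DERIV_nonneg_imp_nondecreasing[OF assms(3)])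
    fix x assume x: "v \<le> x" "x \<le> v'"
    then have x': "h1 < x" "x < h2" using assms by auto
    define s where "s = X1 x + X2 x"
    have D: "PhD k u0 s < 0" using psi1_Phi(2)[OF assms(1) x'] unfolding s_def .
    have ds: "((\<lambda>x. X1 x + X2 x) has_real_derivative inverse (dV (X1 x)) + inverse (dV (X2 x))) (at x)"
      by (intro DERIV_add X1_deriv X2_deriv x')
    have dP: "(Phi k u0 has_real_derivative
       (PhN' k u0 s * PhD k u0 s - PhN k u0 s * PhD' k u0 s) / (PhD k u0 s)^2) (at (X1 x + X2 x))"
      using Phi_deriv[of k u0 s] D unfolding s_def by simp
    have "(g has_real_derivative
       (PhN' k u0 s * PhD k u0 s - PhN k u0 s * PhD' k u0 s) / (PhD k u0 s)^2 *
       (inverse (dV (X1 x)) + inverse (dV (X2 x)))) (at x)"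
      unfolding g_def by (rule DERIV_chain2[OF dP ds])
    moreover have "(PhN' k u0 s * PhD k u0 s - PhN k u0 s * PhD' k u0 s) / (PhD k u0 s)^2 *
       (inverse (dV (X1 x)) + inverse (dV (X2 x))) \<ge> 0"
    proof (intro mult_nonneg_nonneg divide_nonneg_nonneg)
      have "2 * u0 \<le> s" using s_ge[OF assms(1) x'] unfolding s_def .
      moreover have "s \<le> u0 + k" using X_strict[OF x'] unfolding s_def by simp
      ultimately show "0 \<le> PhN' k u0 s * PhD k u0 s - PhN k u0 s * PhD' k u0 s"
        using num_nonneg assms(1) by simp
      show "0 \<le> inverse (dV (X1 x)) + inverse (dV (X2 x))" by (rule s_deriv_nonneg[OF assms(1) x'])
    qed simp
    ultimately show "\<exists>y. (g has_real_derivative y) (at x) \<and> 0 \<le> y" by blast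
  qed
  then show ?thesis unfolding g_def using psi1_Phi(1)[OF assms(1)] assms by simp
qed

lemma psi1_mono: assumes "h1 < v" "v \<le> v'" "v' < h2"
  shows "psi 1 v \<le> psi 1 v'"
proof (cases "k = 2 * u0")
  case True
  then show ?thesis using psi1_sym assms by simp
next
  case False
  then have "k < 2 * u0" using k2 by simp
  then show ?thesis using psi1_mono_asym assms by simp
qed

lemma psi_mono: assumes "h1 < v" "v \<le> v'" "v' < h2"
  shows "psi n v \<le> psi n v'"
proof (cases "v = v'")
  case True then show ?thesis by simp
next
  case False
  then have lt: "v < v'" using assms by simp
  have v: "h1 < v" "v < h2" and v': "h1 < v'" "v' < h2" using assms by auto
  note XS = X_strict[OF v] and XS' = X_strict[OF v']
  have m1: "X1 v' < X1 v" using X1_mono[of v v'] lt assms h2_nonpos by simp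
  have m2: "X2 v < X2 v'" using X2_mono[of v v'] lt assms by simp
  have p1: "dV (X1 v) < 0" "dV (X2 v) > 0" "dV (X1 v') < 0" "dV (X2 v') > 0"
    using dV_neg dV_pos XS XS' by auto
  have "psi 1 v \<le> psi 1 v'" by (rule psi1_mono[OF assms])
  then have m: "(X2 v * (- dV (X1 v)) + X1 v * dV (X2 v)) / (- dV (X1 v) + dV (X2 v))
     \<le> (X2 v' * (- dV (X1 v')) + X1 v' * dV (X2 v')) / (- dV (X1 v') + dV (X2 v'))"
    unfolding psi_form[OF v] psi_form[OF v'] by simp
  show ?thesis unfolding psi_form[OF v] psi_form[OF v']
    by (rule twopoint[OF _ _ _ _ _ _ _ _ m]) (use XS XS' m1 m2 p1 in auto)
qed

definition Ig :: "nat \<Rightarrow> real \<Rightarrow> real \<Rightarrow> real" where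
  "Ig m hh h = integral {h1..h} (\<lambda>v. A m v * sqrt (2 * (hh - v)))"

lemma Ig_has: assumes "h1 < h" "h < h2"
  shows "((\<lambda>v. A m v * sqrt (2 * (hh - v))) has_integral Ig m hh h) {h1..h}"
  unfolding Ig_def using rep[OF assms, of m hh] by (auto intro: integrable_integral simp: has_integral_integrable)

lemma oval_Ig: assumes "h1 < h" "h < h2" shows "oval_integral \<beta> k u0 m h = 2 * Ig m h h"
  unfolding Ig_def by (rule oval_rep[OF assms])

lemma A_h1: "A m h1 = 0"
  unfolding A_def X1_h1 X2_h1 dV_factor by simp

lemma V_le: assumes "h1 < h" "h < h2" "X1 h \<le> u" "u \<le> X2 h" shows "V u \<le> h"
proof -
  note XS = X_strict[OF assms(1,2)]
  show ?thesis
  proof (cases "u \<le> u0")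
    case True
    have "V u \<le> V (X1 h)" using V_dec[of "X1 h" u] assms True XS by (cases "u = X1 h") auto
    then show ?thesis using X1[of h] assms h2_nonpos by auto
  next
    case False
    have "V u \<le> V (X2 h)" using V_inc[of u "X2 h"] assms False XS by (cases "u = X2 h") auto
    then show ?thesis using X2[of h] assms by auto
  qed
qed

lemma I0_pos: assumes "h1 < h" "h < h2" shows "Ig 0 h h > 0"
proof -
  define h0 where "h0 = (h1 + h) / 2"
  have h0: "h1 < h0" "h0 < h" "h0 < h2" using assms by (auto simp: h0_def)
  note XS = X_strict[OF assms] and XS0 = X_strict[of h0]
  have XS0: "0 < X1 h0" "X1 h0 < u0" "u0 < X2 h0" "X2 h0 < k" using X_strict[of h0] h0 by auto
  have sub: "{X1 h0..X2 h0} \<subseteq> {X1 h..X2 h}"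
    using X1_mono[of h0 h] X2_mono[of h0 h] h0 assms h2_nonpos by auto
  have eqI: "Ig 0 h h = integral {X1 h..X2 h} (F 0 h)"
    using Ig_has[OF assms, of 0 h] rep[OF assms, of 0 h] by (metis has_integral_unique)
  define \<delta> where "\<delta> = sqrt (2 * (h - h0))"
  have dpos: "\<delta> > 0" using h0 by (simp add: \<delta>_def)
  have Fge: "F 0 h u \<ge> \<delta>" if u: "u \<in> {X1 h0..X2 h0}" for u
  proof -
    have "V u \<le> h0"
    proof (cases "u \<le> u0")
      case True
      have "V u \<le> V (X1 h0)" using V_dec[of "X1 h0" u] u True XS0 by (cases "u = X1 h0") auto
      then show ?thesis using X1[of h0] h0 h2_nonpos by auto
    next
      case False
      have "V u \<le> V (X2 h0)" using V_inc[of u "X2 h0"] u False XS0 by (cases "u = X2 h0") auto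
      then show ?thesis using X2[of h0] h0 by auto
    qed
    then show ?thesis unfolding F_def \<delta>_def by simp
  qed
  have "integral {X1 h0..X2 h0} (\<lambda>u. \<delta>) \<le> integral {X1 h0..X2 h0} (F 0 h)"
    by (rule integral_le) (use Fge in \<open>auto intro: integrable_continuous_real F_cont\<close>)
  moreover have "integral {X1 h0..X2 h0} (\<lambda>u. \<delta>) = (X2 h0 - X1 h0) * \<delta>"
    using XS0 by simp
  moreover have "(X2 h0 - X1 h0) * \<delta> > 0" using XS0 dpos by simp
  moreover have "integral {X1 h0..X2 h0} (F 0 h) \<le> integral {X1 h..X2 h} (F 0 h)"
    by (rule integral_subset_le[OF sub]) (auto intro: integrable_continuous_real F_cont simp: F_def V_le[OF assms])
  ultimately show ?thesis unfolding eqI by linarith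
qed

lemma R_mono: fixes v w h h' :: real assumes "v \<le> w" "w < h" "h \<le> h'"
  shows "sqrt ((h' - v) / (h - v)) \<le> sqrt ((h' - w) / (h - w))"
proof -
  have "(h' - v) * (h - w) \<le> (h' - w) * (h - v)"
  proof -
    have "(h' - w) * (h - v) - (h' - v) * (h - w) = (h' - h) * (w - v)" by algebra
    moreover have "(h' - h) * (w - v) \<ge> 0" using assms by simp
    ultimately show ?thesis by linarith
  qed
  then have "(h' - v) / (h - v) \<le> (h' - w) / (h - w)" using assms by (simp add: field_simps)
  then show ?thesis by simp
qed

lemma S_split: fixes v h h' :: real assumes "v < h" "h \<le> h'"
  shows "sqrt (2 * (h' - v)) = sqrt ((h' - v) / (h - v)) * sqrt (2 * (h - v))"
proof -
  have "sqrt ((h' - v) / (h - v)) * sqrt (2 * (h - v)) = sqrt ((h' - v) / (h - v) * (2 * (h - v)))"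
    by (rule real_sqrt_mult[symmetric])
  also have "(h' - v) / (h - v) * (2 * (h - v)) = 2 * (h' - v)" using assms by (simp add: field_simps)
  finally show ?thesis by simp
qed

lemma pw_aux: fixes x y r a0 w :: real
  assumes "0 \<le> x * (y - r)" "0 \<le> a0" "0 \<le> w"
  shows "r * ((x * a0) * w) \<le> (x * a0) * (y * w)"
proof -
  have "(x * a0) * (y * w) - r * ((x * a0) * w) = (x * (y - r)) * (a0 * w)" by algebra
  moreover have "(x * (y - r)) * (a0 * w) \<ge> 0" using assms by simp
  ultimately show ?thesis by linarith
qed

lemma G_mono: assumes "h1 < h" "h \<le> h'" "h' < h2"
  shows "G \<beta> k u0 n h \<le> G \<beta> k u0 n h'"
proof (rule ccontr)
  assume "\<not> ?thesis"
  then have lt: "G \<beta> k u0 n h' < G \<beta> k u0 n h" by simp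
  have hh: "h1 < h" "h < h2" and hh': "h1 < h'" "h' < h2" using assms by auto
  have hlt: "h < h'" using lt assms by (cases "h = h'") auto
  have Geq: "G \<beta> k u0 n x = Ig n x x / Ig 0 x x" if "h1 < x" "x < h2" for x
    unfolding G_def oval_Ig[OF that] by simp
  define c where "c = (G \<beta> k u0 n h' + G \<beta> k u0 n h) / 2"
  have "c < G \<beta> k u0 n h" "G \<beta> k u0 n h' < c" using lt unfolding c_def by auto
  then have c1: "c < Ig n h h / Ig 0 h h" and c2: "Ig n h' h' / Ig 0 h' h' < c"
    using Geq[OF hh] Geq[OF hh'] by auto
  have I0: "Ig 0 h h > 0" "Ig 0 h' h' > 0" using I0_pos hh hh' by auto
  define P where "P v = A n v - c * A 0 v" for v
  have P_psi: "P v = (psi n v - c) * A 0 v" if "h1 < v" "v < h2" for v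
    unfolding P_def using A_psi[OF that, of n] by (simp add: algebra_simps)
  have P_h1: "P h1 = 0" unfolding P_def A_h1 by simp
  have A0nn: "A 0 v \<ge> 0" if "h1 \<le> v" "v < h2" for v
    using A0_pos[of v] A_h1 that by (cases "v = h1") auto
  have PI: "((\<lambda>v. P v * sqrt (2 * (hh - v))) has_integral (Ig n hh x - c * Ig 0 hh x)) {h1..x}"
    if "h1 < x" "x < h2" for hh x
  proof -
    have "((\<lambda>v. A n v * sqrt (2 * (hh - v)) - c * (A 0 v * sqrt (2 * (hh - v)))) has_integral
       (Ig n hh x - c * Ig 0 hh x)) {h1..x}"
      by (intro has_integral_diff has_integral_mult_right Ig_has that)
    then show ?thesis unfolding P_def by (simp add: algebra_simps)
  qed
  have pos: "Ig n h h - c * Ig 0 h h > 0"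
    using c1 I0 by (simp add: field_simps)
  have psih: "c < psi n h"
  proof -
    have "Ig n h h \<le> psi n h * Ig 0 h h"
    proof -
      show "Ig n h h \<le> psi n h * Ig 0 h h"
      proof (rule has_integral_le[OF Ig_has[OF hh]])
        show "((\<lambda>v. psi n h * (A 0 v * sqrt (2 * (h - v)))) has_integral psi n h * Ig 0 h h) {h1..h}"
          by (rule has_integral_mult_right[OF Ig_has[OF hh]])
        fix v assume v: "v \<in> {h1..h}"
        show "A n v * sqrt (2 * (h - v)) \<le> psi n h * (A 0 v * sqrt (2 * (h - v)))"
        proof (cases "v = h1")
          case True then show ?thesis by (simp add: A_h1)
        next
          case False
          then have v': "h1 < v" "v < h2" using v hh by auto
          have "psi n v \<le> psi n h" using psi_mono[of v h n] v' v hh by auto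
          then have "psi n v * (A 0 v * sqrt (2 * (h - v))) \<le> psi n h * (A 0 v * sqrt (2 * (h - v)))"
            using A0_pos[OF v'] v by (intro mult_right_mono) auto
          then show ?thesis using A_psi[OF v', of n] by (simp add: algebra_simps)
        qed
      qed

    qed
    then have "Ig n h h / Ig 0 h h \<le> psi n h" using I0 by (simp add: field_simps)
    then show ?thesis using c1 by simp
  qed
  have psige: "c \<le> psi n v" if "h \<le> v" "v < h2" for v
    using psi_mono[of h v n] psih that hh by auto
  obtain r where r0: "r \<ge> 0" and rb: "\<And>v. v \<in> {h1..h} \<Longrightarrow> r * (P v * sqrt (2 * (h - v))) \<le> P v * sqrt (2 * (h' - v))"
  proof (cases "\<forall>v\<in>{h1<..<h}. c \<le> psi n v")
    case True
    show ?thesis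
    proof (rule that[of 0])
      fix v assume v: "v \<in> {h1..h}"
      show "0 * (P v * sqrt (2 * (h - v))) \<le> P v * sqrt (2 * (h' - v))"
      proof (cases "v = h1")
        case True then show ?thesis by (simp add: P_h1)
      next
        case False
        then have v': "h1 < v" "v < h2" using v hh by auto
        have "c \<le> psi n v" using True v False psih by (cases "v = h") auto
        then have "P v \<ge> 0" unfolding P_psi[OF v'] using A0_pos[OF v'] by simp
        then show ?thesis using v hlt by simp
      qed
    qed simp
  next
    case False
    then obtain v0 where v0: "v0 \<in> {h1<..<h}" "psi n v0 < c" by auto
    define T where "T = {v\<in>{h1<..<h}. c \<le> psi n v}"
    have Tne: "T \<noteq> {}"
    proof
      assume Te: "T = {}"
      have "Ig n h h - c * Ig 0 h h \<le> integral {h1..h} (\<lambda>v. 0::real)"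
      proof (rule has_integral_le[OF PI[OF hh]])
        show "((\<lambda>v. 0::real) has_integral integral {h1..h} (\<lambda>v. 0)) {h1..h}" by simp
        fix v assume v: "v \<in> {h1..h}"
        show "P v * sqrt (2 * (h - v)) \<le> 0"
        proof (cases "v = h1 \<or> v = h")
          case True then show ?thesis by (auto simp: P_h1)
        next
          case False
          then have v': "h1 < v" "v < h2" using v hh by auto
          have "v \<in> {h1<..<h}" using v False by auto
          moreover have "v \<notin> T" using Te by simp
          ultimately have "\<not> c \<le> psi n v" unfolding T_def by simp
          then have "psi n v < c" by simp
          then have "P v \<le> 0" unfolding P_psi[OF v'] using A0_pos[OF v'] by (simp add: mult_nonpos_nonneg)
          then show ?thesis using v by (simp add: mult_nonpos_nonneg)
        qed
      qed
      then show False using pos by simp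
    qed
    have bdd: "bdd_below T" unfolding T_def by (rule bdd_belowI[of _ h1]) auto
    define vs where "vs = Inf T"
    have v0vs: "v0 \<le> vs" unfolding vs_def
    proof (rule cInf_greatest[OF Tne])
      fix t assume t: "t \<in> T"
      show "v0 \<le> t"
      proof (rule ccontr)
        assume "\<not> v0 \<le> t"
        then have "psi n t \<le> psi n v0" using psi_mono[of t v0 n] t v0 hh unfolding T_def by auto
        then show False using t v0 unfolding T_def by auto
      qed
    qed
    obtain t0 where t0: "t0 \<in> T" using Tne by auto
    have vsh: "vs < h" using cInf_lower[OF t0 bdd] t0 unfolding vs_def T_def by auto
    have vsh1: "h1 < vs" using v0vs v0 by auto
    define R where "R v = sqrt ((h' - v) / (h - v))" for v
    show ?thesis
    proof (rule that[of "R vs"])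
      show "R vs \<ge> 0" unfolding R_def using vsh hlt by simp
      fix v assume v: "v \<in> {h1..h}"
      show "R vs * (P v * sqrt (2 * (h - v))) \<le> P v * sqrt (2 * (h' - v))"
      proof (cases "v = h1")
        case True then show ?thesis by (simp add: P_h1)
      next
        case False
        then have v': "h1 < v" "v < h2" using v hh by auto
        show ?thesis
        proof (cases "v = h")
          case True
          have "P v \<ge> 0" unfolding P_psi[OF v'] using A0_pos[OF v'] psih True by simp
          then show ?thesis using True hlt by simp
        next
          case False
          then have vh: "v < h" using v by simp
          have split: "sqrt (2 * (h' - v)) = R v * sqrt (2 * (h - v))"
            unfolding R_def by (rule S_split) (use vh hlt in auto)
          have key: "0 \<le> (psi n v - c) * (R v - R vs)"
          proof (cases "v < vs")
            case True
            have "psi n v < c"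
            proof (rule ccontr)
              assume "\<not> psi n v < c"
              then have "v \<in> T" unfolding T_def using v' vh by auto
              then have "vs \<le> v" unfolding vs_def by (rule cInf_lower[OF _ bdd])
              then show False using True by simp
            qed
            moreover have "R v \<le> R vs" unfolding R_def by (rule R_mono) (use True vsh hlt in auto)
            ultimately show ?thesis by (intro mult_nonpos_nonpos) auto
          next
            case False
            show ?thesis
            proof (cases "v = vs")
              case True then show ?thesis by simp
            next
              case False
              then have "vs < v" using \<open>\<not> v < vs\<close> by simp
              then obtain t where t: "t \<in> T" "t < v" using cInf_less_iff[OF Tne bdd] unfolding vs_def by auto
              have "psi n t \<le> psi n v" using psi_mono[of t v n] t v' unfolding T_def by auto
              then have "c \<le> psi n v" using t unfolding T_def by auto
              moreover have "R vs \<le> R v" unfolding R_def by (rule R_mono) (use \<open>vs < v\<close> vh hlt in auto)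
              ultimately show ?thesis by simp
            qed
          qed
          show ?thesis unfolding P_psi[OF v'] split
            by (rule pw_aux[OF key]) (use A0_pos[OF v'] vh in auto)
        qed
      qed
    qed
  qed
  have d1: "integral {h1..h} (\<lambda>v. P v * sqrt (2 * (h' - v))) \<ge> r * (Ig n h h - c * Ig 0 h h)"
  proof -
    have "r * (Ig n h h - c * Ig 0 h h) \<le> integral {h1..h} (\<lambda>v. P v * sqrt (2 * (h' - v)))"
    proof (rule has_integral_le[OF has_integral_mult_right[OF PI[OF hh]]])
      show "((\<lambda>v. P v * sqrt (2 * (h' - v))) has_integral integral {h1..h} (\<lambda>v. P v * sqrt (2 * (h' - v)))) {h1..h}"
        using PI[OF hh, of h'] by (auto intro: integrable_integral simp: has_integral_integrable)
    qed (use rb in auto)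
    then show ?thesis by simp
  qed
  have intg: "(\<lambda>v. P v * sqrt (2 * (h' - v))) integrable_on {h1..h'}"
    using PI[OF hh', of h'] by (rule has_integral_integrable)
  have d2: "integral {h..h'} (\<lambda>v. P v * sqrt (2 * (h' - v))) \<ge> 0"
  proof (rule integral_nonneg)
    show "(\<lambda>v. P v * sqrt (2 * (h' - v))) integrable_on {h..h'}"
      by (rule integrable_subinterval_real[OF intg]) (use hh in auto)
    fix v assume v: "v \<in> {h..h'}"
    then have v': "h1 < v" "v < h2" using hh hh' by auto
    have "P v \<ge> 0" unfolding P_psi[OF v'] using A0_pos[OF v'] psige[of v] v v' by simp
    then show "0 \<le> P v * sqrt (2 * (h' - v))" using v by simp
  qed
  have "Ig n h' h' - c * Ig 0 h' h' = integral {h1..h'} (\<lambda>v. P v * sqrt (2 * (h' - v)))"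
    using PI[OF hh', of h'] by (simp add: integral_unique)
  also have "\<dots> = integral {h1..h} (\<lambda>v. P v * sqrt (2 * (h' - v))) + integral {h..h'} (\<lambda>v. P v * sqrt (2 * (h' - v)))"
    by (rule Henstock_Kurzweil_Integration.integral_combine[symmetric]) (use hh hlt intg in auto)
  finally have fin: "Ig n h' h' - c * Ig 0 h' h' = integral {h1..h} (\<lambda>v. P v * sqrt (2 * (h' - v))) + integral {h..h'} (\<lambda>v. P v * sqrt (2 * (h' - v)))" .
  have "r * (Ig n h h - c * Ig 0 h h) \<ge> 0" using r0 pos by simp
  then have "Ig n h' h' - c * Ig 0 h' h' \<ge> 0" using fin d1 d2 by linarith
  then have "c \<le> Ig n h' h' / Ig 0 h' h'" using I0 by (simp add: field_simps)
  then show False using c2 by simp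
qed

end

theorem proposition3p4:
  fixes n :: nat and \<beta> k u0 :: real
  assumes "n \<ge> 2" and "\<beta> > 0" and "0 < u0" and "u0 < k" and "k \<le> 2 * u0"
  shows "mono_on {\<beta> * u0 ^ 3 / 12 * (u0 - 2 * k) <..< \<beta> * k ^ 3 / 12 * (k - 2 * u0)}
             (G \<beta> k u0 n)
       \<or> antimono_on {\<beta> * u0 ^ 3 / 12 * (u0 - 2 * k) <..< \<beta> * k ^ 3 / 12 * (k - 2 * u0)}
             (G \<beta> k u0 n)"
proof -
  interpret osc \<beta> k u0 using assms by unfold_locales auto
  have eq: "{\<beta> * u0 ^ 3 / 12 * (u0 - 2 * k) <..< \<beta> * k ^ 3 / 12 * (k - 2 * u0)} = {h1<..<h2}"
    by (simp only: h1_eq h2_eq)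
  have "mono_on {h1<..<h2} (G \<beta> k u0 n)"
    by (intro mono_onI) (use G_mono in auto)
  then show ?thesis using eq by simp
qed

end
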